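(* Let $p,q$ be positive integers with $1<q<p-q$, $\gcd(p,q)=1$, and $A=\langle q,p-q\rangle$. Let $((\mathbb{Z},G_{0,j}^+),f_{0,j})_{j\ge0}$ be a directed system of simple components with $G_{0,0}^+=A$, where each $f_{0,j}\colon(\mathbb{Z},G_{0,j}^+)\to(\mathbb{Z},G_{0,j+1}^+)$ is an order-embedding given by multiplication by a positive integer $n_j$, and let $(H,H^+)$ be its direct limit. Let $\mathfrak{n}=\prod_{j\ge0}n_j$, and suppose $r>q$ is a positive integer coprime with $\mathfrak{n}$ and $s\in A$ satisfies $\gcd(r,s)=1$ and $r<s-r$; put $B=\langle r,s-r\rangle$. Define $G_{i,0}^+=rG_{i-1,0}^++s^iB$ for $i>0$ and $G_{i,j}^+=rG_{i-1,j}^++n_{j-1}G_{i,j-1}^+$ for $i,j>0$. Let $f_{i,j}\colon(\mathbb{Z},G_{i,j}^+)\to(\mathbb{Z},G_{i,j+1}^+)$ be multiplication by $n_j$ and $g_{i,j}\colon(\mathbb{Z},G_{i,j}^+)\to(\mathbb{Z},G_{i+1,j}^+)$ multiplication by $r$; let $G_i^+=G_{i,i}^+$ and $f_i\colon(\mathbb{Z},G_i^+)\to(\mathbb{Z},G_{i+1}^+)$ be multiplication by $rn_i$. Let $(K,K^+)=\varinjlim((\mathbb{Z},G_{i,0}^+),g_{i,0})$. Then: (i) $(\mathbb{Z},G_{i,j}^+)$ is a simple component for all $i,j$; (ii) all $f_{i,j}$ and $g_{i,j}$ are order-embeddings; (iii) the direct limit $(G,G^+)$ of $((\mathbb{Z},G_i^+),f_i)$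 is a simple partially ordered group of rank one, and there are order-embeddings $(H,H^+)\to(G,G^+)$ and $(K,K^+)\to(G,G^+)$; (iv) there is an interval $D_r\subseteq G^+$ with $tD_r\neq G^+$ for every positive integer $t\le r-1$ and $rD_r=G^+$.
   Context: $\langle a_1,\dots,a_k\rangle$: submonoid of $\mathbb{Z}^+$ generated by the $a_i$; for subsets $X,Y\subseteq\mathbb{Z}$ and integers $m$, $mX+Y=\{mx+y\}$. A simple component is a simple partially ordered abelian group $(\mathbb{Z},P)$ (simple: every nonzero positive element $u$ is an order-unit, i.e. for all $x$ there is $n$ with $-nu\le x\le nu$). Order-embedding: injective homomorphism with $f(G^+)=f(G)\cap H^+$. Rank one: isomorphic to a nonzero subgroup of $\mathbb{Q}$. Direct limits carry as positive cone the union of images of positive cones. The generalized integer $\prod_j n_j$ assigns to each prime $\ell$ the (possibly infinite) sum of the exponents of $\ell$ in the $n_j$; $r$ coprime with it means no prime divisor of $r$ divides any $n_j$. An interval in $G^+$ is a nonempty, upward directed, order-hereditary subset of $G^+$; $X+Y=\{z\in G^+: z\le x+y,\ x\in X,\ y\in Y\}$ and $tX$ is the $t$-fold sum. *)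

theory Defs
  imports Complex_Main "HOL-Computational_Algebra.Primes"
begin

inductive_set monoid_gen :: "int set \<Rightarrow> int set" for S :: "int set" where
  zero: "0 \<in> monoid_gen S"
| gen: "a \<in> S \<Longrightarrow> a \<in> monoid_gen S"
| add: "x \<in> monoid_gen S \<Longrightarrow> y \<in> monoid_gen S \<Longrightarrow> x + y \<in> monoid_gen S"

definition lin2 :: "int \<Rightarrow> int set \<Rightarrow> int \<Rightarrow> int set \<Rightarrow> int set" where
  "lin2 a X b Y = {a * x + b * y | x y. x \<in> X \<and> y \<in> Y}"

definition po_group :: "'a::comm_ring_1 set \<Rightarrow> 'a set \<Rightarrow> bool" where
  "po_group G P \<longleftrightarrow>
     0 \<in> G \<and> (\<forall>x\<in>G. \<forall>y\<in>G. x + y \<in> G) \<and> (\<forall>x\<in>G. - x \<in> G) \<and>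
     P \<subseteq> G \<and> 0 \<in> P \<and> (\<forall>x\<in>P. \<forall>y\<in>P. x + y \<in> P) \<and>
     (\<forall>x. x \<in> P \<and> - x \<in> P \<longrightarrow> x = 0)"

definition order_unit :: "'a::comm_ring_1 set \<Rightarrow> 'a set \<Rightarrow> 'a \<Rightarrow> bool" where
  "order_unit G P u \<longleftrightarrow> u \<in> P \<and>
     (\<forall>x\<in>G. \<exists>n::nat. of_nat n * u - x \<in> P \<and> x + of_nat n * u \<in> P)"

definition simple_po_group :: "'a::comm_ring_1 set \<Rightarrow> 'a set \<Rightarrow> bool" where
  "simple_po_group G P \<longleftrightarrow> po_group G P \<and> (\<forall>u\<in>P. u \<noteq> 0 \<longrightarrow> order_unit G P u)"

definition simple_component :: "int set \<Rightarrow> bool" where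
  "simple_component P \<longleftrightarrow> simple_po_group (UNIV :: int set) P"

definition group_hom_on :: "'a::ab_group_add set \<Rightarrow> ('a \<Rightarrow> 'b::ab_group_add) \<Rightarrow> bool" where
  "group_hom_on G f \<longleftrightarrow> (\<forall>x\<in>G. \<forall>y\<in>G. f (x + y) = f x + f y)"

definition order_embedding ::
  "'a::ab_group_add set \<Rightarrow> 'a set \<Rightarrow> 'b::ab_group_add set \<Rightarrow> 'b set \<Rightarrow> ('a \<Rightarrow> 'b) \<Rightarrow> bool" where
  "order_embedding G P H Q f \<longleftrightarrow>
     group_hom_on G f \<and> f ` G \<subseteq> H \<and> inj_on f G \<and> f ` P = f ` G \<inter> Q"

definition rank_one :: "'a::ab_group_add set \<Rightarrow> bool" where
  "rank_one G \<longleftrightarrow> (\<exists>f :: 'a \<Rightarrow> rat. group_hom_on G f \<and> inj_on f G \<and> f ` G \<noteq> {0})"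

text \<open>The direct limit of ((Z, P_j), multiplication by m_j), m_j positive integers, realised
  concretely inside Q: the element x at stage j is sent to x / (m_0 \<cdots> m_(j-1)).\<close>
definition dlim_group :: "(nat \<Rightarrow> int) \<Rightarrow> rat set" where
  "dlim_group m = {of_int x / of_int (\<Prod>k<j. m k) | x j. True}"

definition dlim_cone :: "(nat \<Rightarrow> int set) \<Rightarrow> (nat \<Rightarrow> int) \<Rightarrow> rat set" where
  "dlim_cone P m = {of_int x / of_int (\<Prod>k<j. m k) | x j. x \<in> P j}"

definition po_le :: "'a::ab_group_add set \<Rightarrow> 'a \<Rightarrow> 'a \<Rightarrow> bool" where
  "po_le P x y \<longleftrightarrow> y - x \<in> P"

definition is_interval :: "'a::ab_group_add set \<Rightarrow> 'a set \<Rightarrow> bool" where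
  "is_interval P D \<longleftrightarrow> D \<subseteq> P \<and> D \<noteq> {} \<and>
     (\<forall>x\<in>D. \<forall>y\<in>D. \<exists>z\<in>D. po_le P x z \<and> po_le P y z) \<and>
     (\<forall>x\<in>D. \<forall>y\<in>P. po_le P y x \<longrightarrow> y \<in> D)"

definition iv_sum :: "'a::ab_group_add set \<Rightarrow> 'a set \<Rightarrow> 'a set \<Rightarrow> 'a set" where
  "iv_sum P X Y = {z \<in> P. \<exists>x\<in>X. \<exists>y\<in>Y. po_le P z (x + y)}"

primrec iv_mult :: "'a::ab_group_add set \<Rightarrow> 'a set \<Rightarrow> nat \<Rightarrow> 'a set" where
  "iv_mult P X 0 = {0}"
| "iv_mult P X (Suc t) = iv_sum P (iv_mult P X t) X"

text \<open>r coprime with the generalized integer prod_j n_j.\<close>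
definition coprime_gen :: "int \<Rightarrow> (nat \<Rightarrow> int) \<Rightarrow> bool" where
  "coprime_gen r n \<longleftrightarrow> (\<forall>l::int. prime l \<and> l dvd r \<longrightarrow> (\<forall>j. \<not> l dvd n j))"

end

theory Submission
  imports Defs
begin
definition good_sg :: "int set \<Rightarrow> bool" where
  "good_sg P \<longleftrightarrow> 0 \<in> P \<and> (\<forall>x\<in>P. \<forall>y\<in>P. x + y \<in> P) \<and> (\<forall>x\<in>P. 0 \<le> x)
     \<and> (\<exists>N. \<forall>x\<ge>N. x \<in> P)"

lemma mult_closed:
  assumes "0 \<in> P" "\<forall>x\<in>P. \<forall>y\<in>P. x + y \<in> P" "x \<in> P"
  shows "int k * x \<in> P"
  using assms by (induction k) (auto simp: algebra_simps)

lemma mult_closed_int: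
  assumes "0 \<in> P" "\<forall>x\<in>P. \<forall>y\<in>P. x + y \<in> P" "x \<in> P" "0 \<le> (k::int)"
  shows "k * x \<in> P"
  using mult_closed[OF assms(1-3), of "nat k"] assms(4) by simp

lemma good_sg_simple:
  assumes "good_sg P" shows "simple_component P"
proof -
  from assms obtain N where N: "\<forall>x\<ge>N. x \<in> P" and z: "0 \<in> P"
    and cl: "\<forall>x\<in>P. \<forall>y\<in>P. x + y \<in> P" and nn: "\<forall>x\<in>P. 0 \<le> x"
    unfolding good_sg_def by blast
  have pt: "\<forall>x. x \<in> P \<and> - x \<in> P \<longrightarrow> x = 0"
  proof (intro allI impI)
    fix x assume "x \<in> P \<and> - x \<in> P"
    then have "0 \<le> x" "0 \<le> - x" using nn by auto
    then show "x = 0" by simp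
  qed
  have po: "po_group (UNIV::int set) P"
    unfolding po_group_def using z cl pt by blast
  have ou: "order_unit UNIV P u" if "u \<in> P" "u \<noteq> 0" for u
  proof -
    have up: "u \<ge> 1" using nn that by force
    have "\<exists>n::nat. of_nat n * u - x \<in> P \<and> x + of_nat n * u \<in> P" for x
    proof -
      define n where "n = nat (\<bar>N\<bar> + \<bar>x\<bar>)"
      have "of_nat n * u \<ge> of_nat n" using up by (simp add: mult_le_cancel_left1)
      moreover have "int n = \<bar>N\<bar> + \<bar>x\<bar>" unfolding n_def by simp
      ultimately have "of_nat n * u - x \<ge> N" "x + of_nat n * u \<ge> N" by linarith+
      then show ?thesis using N by blast
    qed
    then show ?thesis unfolding order_unit_def using that by blast
  qed
  show ?thesis unfolding simple_component_def simple_po_group_def using po ou by blast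
qed



lemma consec_cofinite:
  assumes z: "0 \<in> P" and cl: "\<forall>x\<in>P. \<forall>y\<in>P. x + y \<in> P"
    and c: "c \<in> P" "c + 1 \<in> P" "(1::int) \<le> c"
  shows "\<forall>x\<ge>c*c. x \<in> P"
proof (intro allI impI)
  fix x assume x: "x \<ge> c * c"
  define a where "a = x div c"
  define b where "b = x mod c"
  have xab: "x = a * c + b" unfolding a_def b_def by simp
  have b: "0 \<le> b" "b < c" unfolding b_def using c by auto
  have "a \<ge> c"
  proof (rule ccontr)
    assume "\<not> a \<ge> c" then have "a \<le> c - 1" by simp
    then have "a * c \<le> (c - 1) * c" using c by (simp add: mult_right_mono)
    moreover have "(c - 1) * c = c * c - c" by (simp add: algebra_simps)
    ultimately show False using x xab b by linarith
  qed
  then have ab: "a - b \<ge> 0" using b by simp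
  have eq: "x = (a - b) * c + b * (c + 1)" using xab by (simp add: algebra_simps)
  have h1: "(a - b) * c \<in> P" using mult_closed_int[OF z cl c(1) ab] .
  have h2: "b * (c + 1) \<in> P" using mult_closed_int[OF z cl c(2) b(1)] .
  have "(a - b) * c + b * (c + 1) \<in> P" using cl h1 h2 by blast
  then show "x \<in> P" using eq by simp
qed

lemma simple_good_sg:
  assumes "simple_component P" "u \<in> P" "u > 0"
  shows "good_sg P"
proof -
  have po: "po_group (UNIV::int set) P" and ou: "\<forall>u\<in>P. u \<noteq> 0 \<longrightarrow> order_unit UNIV P u"
    using assms(1) unfolding simple_component_def simple_po_group_def by blast+
  have z: "0 \<in> P" and cl: "\<forall>x\<in>P. \<forall>y\<in>P. x + y \<in> P" and pt: "\<forall>x. x \<in> P \<and> - x \<in> P \<longrightarrow> x = 0"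
    using po unfolding po_group_def by blast+
  have nn: "\<forall>x\<in>P. 0 \<le> x"
  proof (rule ballI, rule ccontr)
    fix v assume v: "v \<in> P" "\<not> 0 \<le> v"
    have "(- v) * u \<in> P" using mult_closed_int[OF z cl assms(2), of "-v"] v by simp
    moreover have "u * v \<in> P" using mult_closed_int[OF z cl v(1), of u] assms by simp
    moreover have "- ((- v) * u) = u * v" by simp
    ultimately have "(- v) * u \<in> P \<and> - ((- v) * u) \<in> P" by (simp only:)
    then have "(- v) * u = 0" using pt by blast
    then show False using v assms by simp
  qed
  have "order_unit UNIV P u" using ou assms by simp
  then have "\<exists>n::nat. of_nat n * u - 1 \<in> P \<and> 1 + of_nat n * u \<in> P"
    unfolding order_unit_def by blast
  then obtain n :: nat where n: "of_nat n * u - 1 \<in> P" by blast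
  have nu: "of_nat n * u \<in> P" using mult_closed[OF z cl assms(2), of n] by simp
  have cof: "\<exists>N. \<forall>x\<ge>N. x \<in> P"
  proof (cases "of_nat n * u - 1 = 0")
    case True
    then have one: "1 \<in> P" using nu by simp
    have "\<forall>x\<ge>0. x \<in> P"
    proof (intro allI impI)
      fix x :: int assume "0 \<le> x"
      from mult_closed_int[OF z cl one this] show "x \<in> P" by simp
    qed
    then show ?thesis by blast
  next
    case False
    have "0 \<le> of_nat n * u - 1" using nn n by blast
    then have ge: "of_nat n * u - 1 \<ge> 1" using False by linarith
    have n2: "(of_nat n * u - 1) + 1 \<in> P" using nu by simp
    from consec_cofinite[OF z cl n n2 ge] show ?thesis by blast
  qed
  show ?thesis unfolding good_sg_def using z cl nn cof by blast
qed

lemma lin2_closed: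
  assumes "good_sg X" "good_sg Y" "0 < a" "0 < b"
  shows "0 \<in> lin2 a X b Y" "\<forall>x\<in>lin2 a X b Y. \<forall>y\<in>lin2 a X b Y. x + y \<in> lin2 a X b Y"
    "\<forall>x\<in>lin2 a X b Y. 0 \<le> x"
proof -
  have zX: "0 \<in> X" and zY: "0 \<in> Y" and nX: "\<forall>x\<in>X. 0 \<le> x" and nY: "\<forall>x\<in>Y. 0 \<le> x"
    and cX: "\<forall>x\<in>X. \<forall>y\<in>X. x + y \<in> X" and cY: "\<forall>x\<in>Y. \<forall>y\<in>Y. x + y \<in> Y"
    using assms(1,2) unfolding good_sg_def by blast+
  have "(0::int) = a * 0 + b * 0" by simp
  then show "0 \<in> lin2 a X b Y" unfolding lin2_def using zX zY by blast
  show "\<forall>x\<in>lin2 a X b Y. \<forall>y\<in>lin2 a X b Y. x + y \<in> lin2 a X b Y"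
  proof (intro ballI)
    fix x y assume "x \<in> lin2 a X b Y" "y \<in> lin2 a X b Y"
    then obtain x1 x2 y1 y2 where h: "x = a * x1 + b * x2" "y = a * y1 + b * y2"
      "x1 \<in> X" "x2 \<in> Y" "y1 \<in> X" "y2 \<in> Y" unfolding lin2_def by blast
    have e: "x + y = a * (x1 + y1) + b * (x2 + y2)" using h(1,2) by (simp add: algebra_simps)
    have "x1 + y1 \<in> X" "x2 + y2 \<in> Y" using cX cY h by blast+
    then show "x + y \<in> lin2 a X b Y" unfolding lin2_def using e by blast
  qed
  show "\<forall>x\<in>lin2 a X b Y. 0 \<le> x"
  proof
    fix x assume "x \<in> lin2 a X b Y"
    then obtain x1 x2 where h: "x = a * x1 + b * x2" "x1 \<in> X" "x2 \<in> Y" unfolding lin2_def by blast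
    have "0 \<le> a * x1" "0 \<le> b * x2" using h nX nY assms(3,4) by simp_all
    then show "0 \<le> x" using h(1) by simp
  qed
qed

lemma lin2_good:
  assumes X: "good_sg X" and Y: "good_sg Y" and ab: "0 < a" "0 < b" "coprime a b"
  shows "good_sg (lin2 a X b Y)"
proof -
  obtain N1 where N1: "\<forall>x\<ge>N1. x \<in> X" using X unfolding good_sg_def by blast
  obtain N2 where N2: "\<forall>x\<ge>N2. x \<in> Y" using Y unfolding good_sg_def by blast
  obtain u v where uv: "u * a + v * b = 1" using bezout_int[of a b] ab by auto
  have "\<forall>M\<ge>a * \<bar>N1\<bar> + b * (\<bar>N2\<bar> + a). M \<in> lin2 a X b Y"
  proof (intro allI impI)
    fix M assume M: "M \<ge> a * \<bar>N1\<bar> + b * (\<bar>N2\<bar> + a)"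
    define y where "y = \<bar>N2\<bar> + (v * M - \<bar>N2\<bar>) mod a"
    have "0 \<le> (v * M - \<bar>N2\<bar>) mod a" "(v * M - \<bar>N2\<bar>) mod a < a" using ab by simp_all
    then have y1: "y \<ge> N2" "y < \<bar>N2\<bar> + a" unfolding y_def by linarith+
    have "a dvd (v * M - \<bar>N2\<bar>) - (v * M - \<bar>N2\<bar>) mod a"
      by (simp add: mod_eq_dvd_iff)
    then have "a dvd v * M - y" unfolding y_def by (simp add: algebra_simps)
    then obtain k where k: "v * M - y = a * k" by blast
    have y': "y = v * M - a * k" using k by linarith
    have "M - b * y = M - b * v * M + a * b * k" unfolding y' by (simp add: algebra_simps)
    also have "... = (u * a + v * b) * M - b * v * M + a * b * k" using uv by simp
    also have "... = u * a * M + a * b * k" by (simp add: algebra_simps)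
    finally have fin: "M - b * y = a * (u * M + b * k)" by (simp add: algebra_simps)
    define x where "x = u * M + b * k"
    have Mx: "M = a * x + b * y" using fin unfolding x_def by simp
    have "b * y \<le> b * (\<bar>N2\<bar> + a)" using y1 ab by simp
    then have "a * x \<ge> a * \<bar>N1\<bar>" using M Mx by linarith
    then have "x \<ge> \<bar>N1\<bar>" using ab by simp
    then have "x \<in> X" using N1 by simp
    moreover have "y \<in> Y" using N2 y1 by simp
    ultimately show "M \<in> lin2 a X b Y" unfolding lin2_def using Mx by blast
  qed
  then show ?thesis unfolding good_sg_def using lin2_closed[OF X Y ab(1,2)] by blast
qed



lemma good_nonneg: "good_sg {x::int. 0 \<le> x}"
  unfolding good_sg_def by auto

lemma monoid_gen_pair:
  "monoid_gen {a, b} = {int i * a + int j * b | i j. True}"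
proof
  show "monoid_gen {a, b} \<subseteq> {int i * a + int j * b | i j. True}"
  proof
    fix x assume "x \<in> monoid_gen {a, b}"
    then show "x \<in> {int i * a + int j * b | i j. True}"
    proof induction
      case zero then show ?case by (rule CollectI, rule exI[of _ 0], rule exI[of _ 0]) simp
    next
      case (gen x)
      then have "x = a \<or> x = b" by simp
      then show ?case
      proof
        assume "x = a" then have "x = int 1 * a + int 0 * b" by simp
        then show ?case by blast
      next
        assume "x = b" then have "x = int 0 * a + int 1 * b" by simp
        then show ?case by blast
      qed
    next
      case (add x y)
      then obtain i j i' j' where "x = int i * a + int j * b" "y = int i' * a + int j' * b" by blast
      then have "x + y = int (i + i') * a + int (j + j') * b" by (simp add: algebra_simps)
      then show ?case by blast
    qed
  qed
  show "{int i * a + int j * b | i j. True} \<subseteq> monoid_gen {a, b}"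
  proof clarify
    fix i j
    have cl: "\<forall>x\<in>monoid_gen {a, b}. \<forall>y\<in>monoid_gen {a, b}. x + y \<in> monoid_gen {a, b}"
      by (auto intro: monoid_gen.add)
    have "int i * a \<in> monoid_gen {a,b}" by (rule mult_closed[OF monoid_gen.zero cl]) (auto intro: monoid_gen.gen)
    moreover have "int j * b \<in> monoid_gen {a,b}" by (rule mult_closed[OF monoid_gen.zero cl]) (auto intro: monoid_gen.gen)
    ultimately show "int i * a + int j * b \<in> monoid_gen {a, b}" by (rule monoid_gen.add)
  qed
qed



lemma monoid_gen_pair_lin2:
  assumes "0 < a" "0 < b"
  shows "monoid_gen {a, b} = lin2 a {x. 0 \<le> x} b {x. 0 \<le> x}"
  unfolding monoid_gen_pair lin2_def
proof (intro equalityI subsetI)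
  fix z assume "z \<in> {int i * a + int j * b |i j. True}"
  then obtain i j where "z = int i * a + int j * b" by blast
  then have "z = a * int i + b * int j" by (simp add: mult.commute)
  then show "z \<in> {a * x + b * y |x y. x \<in> {x. 0 \<le> x} \<and> y \<in> {x. 0 \<le> x}}" by force
next
  fix z assume "z \<in> {a * x + b * y |x y. x \<in> {x. 0 \<le> x} \<and> y \<in> {x. 0 \<le> x}}"
  then obtain x y where h: "z = a * x + b * y" "0 \<le> x" "0 \<le> y" by blast
  then have "z = int (nat x) * a + int (nat y) * b" by (simp add: mult.commute)
  then show "z \<in> {int i * a + int j * b |i j. True}" by blast
qed

lemma monoid_gen_good:
  assumes "0 < a" "0 < b" "coprime a b"
  shows "good_sg (monoid_gen {a, b})"
  unfolding monoid_gen_pair_lin2[OF assms(1,2)] by (rule lin2_good[OF good_nonneg good_nonneg assms])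


lemma coprime_gen_coprime:
  assumes "coprime_gen r n" "0 < r"
  shows "coprime r (n j)"
proof (rule ccontr)
  assume "\<not> coprime r (n j)"
  then obtain c where c: "c dvd r" "c dvd n j" "\<not> is_unit c" by (rule not_coprimeE)
  have "\<bar>c\<bar> \<noteq> 1" using c(3) by auto
  then obtain l where "prime l" "l dvd c" by (rule prime_factor_int)
  then show False using assms c unfolding coprime_gen_def by (meson dvd_trans)
qed




lemma emb_iff:
  fixes c :: int
  assumes "c \<noteq> 0"
  shows "order_embedding (UNIV :: int set) P (UNIV :: int set) Q (\<lambda>x. c * x) \<longleftrightarrow> (\<forall>x. x \<in> P \<longleftrightarrow> c * x \<in> Q)"
proof -
  have inj: "inj_on (\<lambda>x. c * x) UNIV" using assms by (auto simp: inj_on_def)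
  have hom: "group_hom_on UNIV (\<lambda>x. c * x)" unfolding group_hom_on_def by (simp add: algebra_simps)
  have "(\<lambda>x. c * x) ` P = (\<lambda>x. c * x) ` UNIV \<inter> Q \<longleftrightarrow> (\<forall>x. x \<in> P \<longleftrightarrow> c * x \<in> Q)"
  proof
    assume h: "(\<lambda>x. c * x) ` P = (\<lambda>x. c * x) ` UNIV \<inter> Q"
    show "\<forall>x. x \<in> P \<longleftrightarrow> c * x \<in> Q"
    proof (intro allI iffI)
      fix x assume "x \<in> P" then have "c * x \<in> (\<lambda>x. c * x) ` P" by blast
      then show "c * x \<in> Q" using h by blast
    next
      fix x assume "c * x \<in> Q" then have "c * x \<in> (\<lambda>x. c * x) ` P" using h by blast
      then obtain y where "y \<in> P" "c * x = c * y" by blast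
      then show "x \<in> P" using assms by simp
    qed
  next
    assume h: "\<forall>x. x \<in> P \<longleftrightarrow> c * x \<in> Q"
    show "(\<lambda>x. c * x) ` P = (\<lambda>x. c * x) ` UNIV \<inter> Q"
      using h by auto
  qed
  then show ?thesis unfolding order_embedding_def using inj hom by simp
qed

lemma coprime_diff_r:
  fixes r s :: int
  assumes "coprime r s" shows "coprime r (s - r)"
proof (rule coprimeI)
  fix c assume "c dvd r" "c dvd s - r"
  then have "c dvd s" using dvd_add[of c "s - r" r] by simp
  then show "is_unit c" using assms \<open>c dvd r\<close> coprime_common_divisor by blast
qed

locale S =
  fixes p q r s :: int
    and n :: "nat \<Rightarrow> int"
    and P0 :: "nat \<Rightarrow> int set"
    and G :: "nat \<Rightarrow> nat \<Rightarrow> int set"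
  assumes pq: "0 < p" "0 < q" "1 < q" "q < p - q" "gcd p q = 1"
    and n_pos: "\<forall>j. 0 < n j"
    and P0_simple: "\<forall>j. simple_component (P0 j)"
    and P0_0: "P0 0 = monoid_gen {q, p - q}"
    and P0_emb: "\<forall>j. order_embedding (UNIV :: int set) (P0 j) (UNIV :: int set) (P0 (Suc j)) (\<lambda>x. n j * x)"
    and r_pos: "0 < r" and r_gt: "q < r"
    and r_cop: "coprime_gen r n"
    and s_in: "s \<in> monoid_gen {q, p - q}"
    and rs: "gcd r s = 1" "r < s - r"
    and G_0j: "\<forall>j. G 0 j = P0 j"
    and G_i0: "\<forall>i. G (Suc i) 0 = lin2 r (G i 0) (s ^ Suc i) (monoid_gen {r, s - r})"
    and G_ij: "\<forall>i j. G (Suc i) (Suc j) = lin2 r (G i (Suc j)) (n j) (G (Suc i) j)"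
begin

abbreviation "B \<equiv> monoid_gen {r, s - r}"

lemma r_gt1: "1 < r" using pq r_gt by simp
lemma s_pos: "0 < s" "r < s" using rs r_pos by simp_all
lemma cop_rs: "coprime r s" using rs by (simp add: coprime_iff_gcd_eq_1)
lemma cop_rn: "coprime r (n j)" using coprime_gen_coprime[OF r_cop r_pos] .
lemma cop_rsp: "coprime r (s ^ k)" using cop_rs by simp

lemma good_B: "good_sg B"
  using monoid_gen_good[OF r_pos _ coprime_diff_r[OF cop_rs]] s_pos by simp

lemma s_in_B: "s \<in> B"
proof -
  have "r \<in> B" "s - r \<in> B" by (auto intro: monoid_gen.gen)
  then have "r + (s - r) \<in> B" by (rule monoid_gen.add)
  then show ?thesis by simp
qed

lemma B_cl: "\<forall>x\<in>B. \<forall>y\<in>B. x + y \<in> B" by (auto intro: monoid_gen.add)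

lemma B_mult: "0 \<le> m \<Longrightarrow> x \<in> B \<Longrightarrow> m * x \<in> B"
  using mult_closed_int[OF monoid_gen.zero B_cl] by blast

lemma B_nonneg: "x \<in> B \<Longrightarrow> 0 \<le> x" using good_B unfolding good_sg_def by blast

lemma A_cl: "\<forall>x\<in>monoid_gen {q, p - q}. \<forall>y\<in>monoid_gen {q, p - q}. x + y \<in> monoid_gen {q, p - q}"
  by (auto intro: monoid_gen.add)

lemma A_mult: "0 \<le> m \<Longrightarrow> x \<in> monoid_gen {q, p - q} \<Longrightarrow> m * x \<in> monoid_gen {q, p - q}"
  using mult_closed_int[OF monoid_gen.zero A_cl] by blast

lemma P0_iff: "x \<in> P0 j \<longleftrightarrow> n j * x \<in> P0 (Suc j)"
  using P0_emb emb_iff[of "n j" "P0 j" "P0 (Suc j)"] n_pos by (metis less_irrefl)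

lemma P0_pos: "\<exists>u\<in>P0 j. 0 < u"
proof (induction j)
  case 0
  have "q \<in> P0 0" unfolding P0_0 by (auto intro: monoid_gen.gen)
  then show ?case using pq by blast
next
  case (Suc j)
  then obtain u where "u \<in> P0 j" "0 < u" by blast
  then have "n j * u \<in> P0 (Suc j)" "0 < n j * u" using P0_iff n_pos by auto
  then show ?case by blast
qed

lemma good_G: "good_sg (G i j)"
proof (induction i arbitrary: j)
  case 0
  obtain u where "u \<in> P0 j" "0 < u" using P0_pos by blast
  then show ?case using simple_good_sg P0_simple G_0j by metis
next
  case (Suc i)
  note IHi = Suc.IH
  show ?case
  proof (induction j)
    case 0
    have "good_sg (lin2 r (G i 0) (s ^ Suc i) B)"
      by (rule lin2_good[OF IHi good_B r_pos]) (use s_pos cop_rsp in auto)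
    then show ?case using G_i0 by simp
  next
    case (Suc j)
    have "good_sg (lin2 r (G i (Suc j)) (n j) (G (Suc i) j))"
      by (rule lin2_good[OF IHi Suc.IH r_pos]) (use n_pos cop_rn in auto)
    then show ?case using G_ij by simp
  qed
qed

lemma G_zero: "0 \<in> G i j" using good_G unfolding good_sg_def by blast
lemma G_cl: "x \<in> G i j \<Longrightarrow> y \<in> G i j \<Longrightarrow> x + y \<in> G i j" using good_G unfolding good_sg_def by blast
lemma G_nonneg: "x \<in> G i j \<Longrightarrow> 0 \<le> x" using good_G unfolding good_sg_def by blast

lemma F1: "x \<in> G i j \<Longrightarrow> r * x \<in> G (Suc i) j"
proof (cases j)
  case 0
  assume "x \<in> G i j"
  moreover have "r * x = r * x + s ^ Suc i * 0" by simp
  ultimately show ?thesis using G_i0 0 monoid_gen.zero unfolding lin2_def by fastforce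
next
  case (Suc j')
  assume "x \<in> G i j"
  moreover have "r * x = r * x + n j' * 0" by simp
  ultimately show ?thesis using G_ij Suc G_zero unfolding lin2_def by fastforce
qed

lemma F2: "x \<in> G i j \<Longrightarrow> n j * x \<in> G i (Suc j)"
proof (cases i)
  case 0
  assume "x \<in> G i j"
  then show ?thesis using P0_iff G_0j 0 by simp
next
  case (Suc i')
  assume "x \<in> G i j"
  moreover have "n j * x = r * 0 + n j * x" by simp
  ultimately show ?thesis using G_ij Suc G_zero unfolding lin2_def by fastforce
qed

lemma s_lemma: "0 \<le> m \<Longrightarrow> s ^ Suc i * m \<in> G i 0"
proof (cases i)
  case 0
  assume m: "0 \<le> m"
  have "m * s \<in> monoid_gen {q, p - q}" using A_mult[OF m s_in] .
  then show ?thesis using 0 G_0j P0_0 by (simp add: mult.commute)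
next
  case (Suc i')
  assume m: "0 \<le> m"
  have sm: "s * m \<in> B" using B_mult[OF m s_in_B] by (simp add: mult.commute)
  have "s ^ Suc i * m = r * 0 + s ^ Suc i' * (s * m)" using Suc by simp
  then show ?thesis using G_i0 Suc G_zero sm unfolding lin2_def by fastforce
qed

lemma sB_lemma: "b \<in> B \<Longrightarrow> s ^ Suc i * b \<in> G (Suc i) 0"
proof -
  assume b: "b \<in> B"
  have "s ^ Suc i * b = r * 0 + s ^ Suc i * b" by simp
  then show ?thesis using G_i0 G_zero b unfolding lin2_def by fastforce
qed

lemma f_iff: "x \<in> G i j \<longleftrightarrow> n j * x \<in> G i (Suc j)"
proof (induction i arbitrary: j x)
  case 0
  then show ?case using P0_iff G_0j by simp
next
  case (Suc i)
  show ?case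
  proof
    assume "x \<in> G (Suc i) j" then show "n j * x \<in> G (Suc i) (Suc j)" by (rule F2)
  next
    assume "n j * x \<in> G (Suc i) (Suc j)"
    then obtain a b where ab: "n j * x = r * a + n j * b" "a \<in> G i (Suc j)" "b \<in> G (Suc i) j"
      using G_ij unfolding lin2_def by blast
    have "n j dvd r * a" using ab(1) by (metis add_diff_cancel_right' dvd_diff dvd_triv_left)
    moreover have "coprime (n j) r" using cop_rn by (simp add: ac_simps)
    ultimately have "n j dvd a" using coprime_dvd_mult_right_iff by blast
    then obtain a' where a': "a = n j * a'" by blast
    then have "a' \<in> G i j" using Suc.IH ab(2) by simp
    then have ra: "r * a' \<in> G (Suc i) j" by (rule F1)
    have "n j * x = n j * (r * a' + b)" using ab(1) a' by (simp add: algebra_simps)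
    then have "x = r * a' + b" using n_pos by (metis less_irrefl mult_cancel_left)
    then show "x \<in> G (Suc i) j" using G_cl[OF ra ab(3)] by simp
  qed
qed

lemma g_iff: "x \<in> G i j \<longleftrightarrow> r * x \<in> G (Suc i) j"
proof (induction j arbitrary: i x)
  case 0
  show ?case
  proof
    assume "x \<in> G i 0" then show "r * x \<in> G (Suc i) 0" by (rule F1)
  next
    assume "r * x \<in> G (Suc i) 0"
    then obtain a b where ab: "r * x = r * a + s ^ Suc i * b" "a \<in> G i 0" "b \<in> B"
      using G_i0 unfolding lin2_def by blast
    have "r dvd s ^ Suc i * b" using ab(1) by (metis add_diff_cancel_left' dvd_diff dvd_triv_left)
    then have "r dvd b" using cop_rsp coprime_dvd_mult_right_iff by blast
    then obtain b' where b': "b = r * b'" by blast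
    have "0 \<le> b'" using B_nonneg[OF ab(3)] b' r_pos by (simp add: zero_le_mult_iff)
    then have sb: "s ^ Suc i * b' \<in> G i 0" by (rule s_lemma)
    have "r * x = r * (a + s ^ Suc i * b')" using ab(1) b' by (simp add: algebra_simps)
    then have "x = a + s ^ Suc i * b'" using r_pos by simp
    then show "x \<in> G i 0" using G_cl[OF ab(2) sb] by simp
  qed
next
  case (Suc j)
  show ?case
  proof
    assume "x \<in> G i (Suc j)" then show "r * x \<in> G (Suc i) (Suc j)" by (rule F1)
  next
    assume "r * x \<in> G (Suc i) (Suc j)"
    then obtain a b where ab: "r * x = r * a + n j * b" "a \<in> G i (Suc j)" "b \<in> G (Suc i) j"
      using G_ij unfolding lin2_def by blast
    have "r dvd n j * b" using ab(1) by (metis add_diff_cancel_left' dvd_diff dvd_triv_left)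
    then have "r dvd b" using cop_rn coprime_dvd_mult_right_iff by blast
    then obtain b' where b': "b = r * b'" by blast
    then have "b' \<in> G i j" using Suc.IH ab(3) by simp
    then have nb: "n j * b' \<in> G i (Suc j)" by (rule F2)
    have "r * x = r * (a + n j * b')" using ab(1) b' by (simp add: algebra_simps)
    then have "x = a + n j * b'" using r_pos by simp
    then show "x \<in> G i (Suc j)" using G_cl[OF ab(2) nb] by simp
  qed
qed

lemma part12:
  "(\<forall>i j. simple_component (G i j))
   \<and> (\<forall>i j. order_embedding (UNIV :: int set) (G i j) (UNIV :: int set) (G i (Suc j)) (\<lambda>x. n j * x)
           \<and> order_embedding (UNIV :: int set) (G i j) (UNIV :: int set) (G (Suc i) j) (\<lambda>x. r * x))"
proof -
  have "simple_component (G i j)" for i j using good_sg_simple[OF good_G] .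
  moreover have "order_embedding (UNIV :: int set) (G i j) (UNIV :: int set) (G i (Suc j)) (\<lambda>x. n j * x)" for i j
    using emb_iff[of "n j"] f_iff n_pos by (metis less_irrefl)
  moreover have "order_embedding (UNIV :: int set) (G i j) (UNIV :: int set) (G (Suc i) j) (\<lambda>x. r * x)" for i j
    using emb_iff[of r] g_iff r_pos by (metis less_irrefl)
  ultimately show ?thesis by blast
qed

end


context S begin

definition Nn :: "nat \<Rightarrow> int" where "Nn j = (\<Prod>k<j. n k)"
definition den :: "nat \<Rightarrow> int" where "den i = r ^ i * Nn i"
definition R :: "nat \<Rightarrow> nat \<Rightarrow> int" where "R j d = (\<Prod>k<d. n (j + k))"
definition Q :: "nat \<Rightarrow> nat \<Rightarrow> rat set" where
  "Q i j = {of_int x / of_int (r ^ i * Nn j) | x. x \<in> G i j}"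
abbreviation "Pc \<equiv> dlim_cone (\<lambda>i. G i i) (\<lambda>i. r * n i)"
abbreviation "Gg \<equiv> dlim_group (\<lambda>i. r * n i)"

lemma Nn_pos: "0 < Nn j" unfolding Nn_def using n_pos by (simp add: prod_pos)
lemma R_pos: "0 < R j d" unfolding R_def using n_pos by (simp add: prod_pos)
lemma Nn_Suc: "Nn (Suc j) = Nn j * n j" unfolding Nn_def by simp
lemma Nn_0: "Nn 0 = 1" unfolding Nn_def by simp
lemma Nn_add: "Nn (j + d) = Nn j * R j d"
  by (induction d) (simp_all add: R_def Nn_def)
lemma den_pos: "0 < den i" unfolding den_def using Nn_pos r_pos by simp
lemma den_prod: "(\<Prod>k<i. r * n k) = den i"
  unfolding den_def Nn_def by (simp add: prod.distrib)
lemma den_dvd: "i \<le> m \<Longrightarrow> den i dvd den m"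
proof -
  assume "i \<le> m"
  then obtain d where m: "m = i + d" using le_Suc_ex by blast
  have "den m = den i * (r ^ d * R i d)" unfolding den_def m Nn_add by (simp add: power_add algebra_simps)
  then show ?thesis by simp
qed

lemma Pc_eq: "Pc = (\<Union>i. Q i i)"
  unfolding dlim_cone_def Q_def den_prod den_def by blast

lemma Gg_eq: "Gg = {of_int x / of_int (den i) | x i. True}"
  unfolding dlim_group_def den_prod by blast

lemma Q_up_i: "Q i j \<subseteq> Q (Suc i) j"
proof
  fix z assume "z \<in> Q i j"
  then obtain x where x: "x \<in> G i j" "z = of_int x / of_int (r ^ i * Nn j)" unfolding Q_def by blast
  have "z = of_int (r * x) / of_int (r ^ Suc i * Nn j)" using x(2) r_pos by simp
  then show "z \<in> Q (Suc i) j" unfolding Q_def using F1[OF x(1)] by blast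
qed

lemma Q_up_j: "Q i j \<subseteq> Q i (Suc j)"
proof
  fix z assume "z \<in> Q i j"
  then obtain x where x: "x \<in> G i j" "z = of_int x / of_int (r ^ i * Nn j)" unfolding Q_def by blast
  have "n j \<noteq> 0" using n_pos by (metis less_irrefl)
  then have "z = of_int (n j * x) / of_int (r ^ i * Nn (Suc j))" using x(2) by (simp add: Nn_Suc)
  then show "z \<in> Q i (Suc j)" unfolding Q_def using F2[OF x(1)] by blast
qed

lemma Q_mono: "i \<le> i' \<Longrightarrow> j \<le> j' \<Longrightarrow> Q i j \<subseteq> Q i' j'"
proof -
  assume h: "i \<le> i'" "j \<le> j'"
  have "Q i j \<subseteq> Q i' j" using lift_Suc_mono_le[of "\<lambda>i. Q i j", OF Q_up_i h(1)] .
  also have "... \<subseteq> Q i' j'" using lift_Suc_mono_le[of "\<lambda>j. Q i' j", OF Q_up_j h(2)] .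
  finally show ?thesis .
qed

lemma Q_Pc: "Q i j \<subseteq> Pc"
proof -
  have "Q i j \<subseteq> Q (max i j) (max i j)" by (rule Q_mono) auto
  then show ?thesis unfolding Pc_eq by blast
qed

lemma CM: "x \<in> G i j \<Longrightarrow> of_int x / of_int (r ^ i * Nn j) \<in> Pc"
  using Q_Pc unfolding Q_def by blast

lemma g_iter: "x \<in> G i j \<longleftrightarrow> r ^ d * x \<in> G (i + d) j"
proof (induction d arbitrary: x)
  case 0 then show ?case by simp
next
  case (Suc d)
  have "x \<in> G i j \<longleftrightarrow> r ^ d * x \<in> G (i + d) j" by (rule Suc.IH)
  also have "... \<longleftrightarrow> r * (r ^ d * x) \<in> G (Suc (i + d)) j" by (rule g_iff)
  finally show ?case by (simp add: ac_simps)
qed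

lemma f_iter: "x \<in> G i j \<longleftrightarrow> R j d * x \<in> G i (j + d)"
proof (induction d arbitrary: x)
  case 0 then show ?case by (simp add: R_def)
next
  case (Suc d)
  have "x \<in> G i j \<longleftrightarrow> R j d * x \<in> G i (j + d)" by (rule Suc.IH)
  also have "... \<longleftrightarrow> n (j + d) * (R j d * x) \<in> G i (Suc (j + d))" by (rule f_iff)
  finally show ?case by (simp add: R_def ac_simps)
qed

lemma CM_rev:
  assumes "of_int x / of_int (r ^ i * Nn j) \<in> Pc"
  shows "x \<in> G i j"
proof -
  obtain a where "of_int x / of_int (r ^ i * Nn j) \<in> Q a a" using assms unfolding Pc_eq by blast
  define m where "m = max a (max i j)"
  have "Q a a \<subseteq> Q m m" by (rule Q_mono) (auto simp: m_def)
  then obtain y where y: "y \<in> G m m" "of_int x / of_int (r ^ i * Nn j) = (of_int y / of_int (r ^ m * Nn m) :: rat)"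
    using \<open>_ \<in> Q a a\<close> unfolding Q_def by blast
  have "i \<le> m" "j \<le> m" by (simp_all add: m_def)
  then obtain d1 d2 where d1: "m = i + d1" and d2: "m = j + d2" using le_Suc_ex by metis
  have p1: "r ^ i * Nn j \<noteq> 0" "r ^ m * Nn m \<noteq> 0" using r_pos Nn_pos by (simp_all add: less_imp_neq[symmetric])
  have "of_int x * of_int (r ^ m * Nn m) = (of_int y * of_int (r ^ i * Nn j) :: rat)"
    using y(2) p1 by (simp add: frac_eq_eq)
  then have "x * (r ^ m * Nn m) = y * (r ^ i * Nn j)"
    by (metis of_int_eq_iff of_int_mult)
  also have "r ^ m * Nn m = (r ^ i * Nn j) * (r ^ d1 * R j d2)"
    using d1 d2 Nn_add[of j d2] by (simp add: power_add ac_simps)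
  finally have "(r ^ i * Nn j) * (x * (r ^ d1 * R j d2)) = (r ^ i * Nn j) * y" by (simp add: ac_simps)
  then have "x * (r ^ d1 * R j d2) = y" using p1(1) by (metis mult_left_cancel)
  then have yx: "y = R j d2 * (r ^ d1 * x)" by (simp add: ac_simps)
  have "r ^ d1 * x \<in> G (i + d1) j \<longleftrightarrow> R j d2 * (r ^ d1 * x) \<in> G (i + d1) (j + d2)" by (rule f_iter)
  then have "r ^ d1 * x \<in> G (i + d1) j" using y(1) yx d1 d2 by simp
  then show ?thesis using g_iter by blast
qed

lemma Pc_den: "z \<in> Pc \<longleftrightarrow> (\<exists>x i. x \<in> G i i \<and> z = of_int x / of_int (den i))"
  unfolding Pc_eq Q_def den_def by blast

lemma lift_Gg: "i \<le> m \<Longrightarrow> \<exists>c. of_int x / of_int (den i) = (of_int (x * c) / of_int (den m) :: rat)"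
proof -
  assume "i \<le> m"
  then obtain c where c: "den m = den i * c" using den_dvd by blast
  have "c \<noteq> 0" using c den_pos by (metis less_irrefl mult_zero_right)
  then have "of_int x / of_int (den i) = (of_int (x * c) / of_int (den m) :: rat)"
    using c den_pos by (simp add: less_imp_neq[symmetric])
  then show ?thesis by blast
qed

lemma lift_Pc: "x \<in> G i i \<Longrightarrow> i \<le> m \<Longrightarrow> \<exists>y\<in>G m m. of_int x / of_int (den i) = (of_int y / of_int (den m) :: rat)"
proof -
  assume "x \<in> G i i" "i \<le> m"
  then have "of_int x / of_int (den i) \<in> Q m m" using Q_mono[of i m i m] unfolding Q_def den_def by blast
  then show ?thesis unfolding Q_def den_def by blast
qed

lemma Pc_nonneg: "z \<in> Pc \<Longrightarrow> 0 \<le> z"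
  unfolding Pc_den using G_nonneg den_pos by (auto intro!: divide_nonneg_pos)

lemma Pc_add: "z1 \<in> Pc \<Longrightarrow> z2 \<in> Pc \<Longrightarrow> z1 + z2 \<in> Pc"
proof -
  assume "z1 \<in> Pc" "z2 \<in> Pc"
  then obtain x1 i1 x2 i2 where h: "x1 \<in> G i1 i1" "z1 = of_int x1 / of_int (den i1)"
    "x2 \<in> G i2 i2" "z2 = of_int x2 / of_int (den i2)" unfolding Pc_den by blast
  define m where "m = max i1 i2"
  obtain y1 where y1: "y1 \<in> G m m" "z1 = of_int y1 / of_int (den m)" using lift_Pc[OF h(1), of m] h(2) m_def by auto
  obtain y2 where y2: "y2 \<in> G m m" "z2 = of_int y2 / of_int (den m)" using lift_Pc[OF h(3), of m] h(4) m_def by auto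
  have "z1 + z2 = of_int (y1 + y2) / of_int (den m)" using y1 y2 by (simp add: add_divide_distrib)
  then show ?thesis unfolding Pc_den using G_cl[OF y1(1) y2(1)] by blast
qed

lemma Pc_zero: "0 \<in> Pc" using CM[OF G_zero, of 0 0] by simp

lemma Pc_Gg: "Pc \<subseteq> Gg"
proof
  fix z assume "z \<in> Pc"
  then obtain x i where "z = of_int x / of_int (den i)" using Pc_den by blast
  then show "z \<in> Gg" unfolding Gg_eq by blast
qed

lemma Gg_add: "z1 \<in> Gg \<Longrightarrow> z2 \<in> Gg \<Longrightarrow> z1 + z2 \<in> Gg"
proof -
  assume "z1 \<in> Gg" "z2 \<in> Gg"
  then obtain x1 i1 x2 i2 where h: "z1 = of_int x1 / of_int (den i1)" "z2 = of_int x2 / of_int (den i2)"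
    unfolding Gg_eq by blast
  define m where "m = max i1 i2"
  obtain c1 where c1: "z1 = of_int (x1 * c1) / of_int (den m)" using lift_Gg[of i1 m x1] h m_def by auto
  obtain c2 where c2: "z2 = of_int (x2 * c2) / of_int (den m)" using lift_Gg[of i2 m x2] h m_def by auto
  have "z1 + z2 = of_int (x1 * c1 + x2 * c2) / of_int (den m)" using c1 c2 by (simp add: add_divide_distrib)
  then show ?thesis unfolding Gg_eq by blast
qed

lemma Gg_neg: "z \<in> Gg \<Longrightarrow> - z \<in> Gg"
proof -
  assume "z \<in> Gg"
  then obtain x i where "z = of_int x / of_int (den i)" unfolding Gg_eq by blast
  then have "- z = of_int (- x) / of_int (den i)" by simp
  then show ?thesis unfolding Gg_eq by blast
qed

lemma Gg_zero: "0 \<in> Gg" using Pc_zero Pc_Gg by blast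

lemma po_Gg: "po_group Gg Pc"
  unfolding po_group_def
proof (intro conjI ballI allI impI)
  show "0 \<in> Gg" by (rule Gg_zero)
  show "x + y \<in> Gg" if "x \<in> Gg" "y \<in> Gg" for x y using Gg_add that .
  show "- x \<in> Gg" if "x \<in> Gg" for x using Gg_neg that .
  show "Pc \<subseteq> Gg" by (rule Pc_Gg)
  show "0 \<in> Pc" by (rule Pc_zero)
  show "x + y \<in> Pc" if "x \<in> Pc" "y \<in> Pc" for x y using Pc_add that .
  show "x = 0" if "x \<in> Pc \<and> - x \<in> Pc" for x
  proof -
    have "0 \<le> x" "0 \<le> - x" using that Pc_nonneg by blast+
    then show ?thesis by simp
  qed
qed

lemma ou_Gg: "u \<in> Pc \<Longrightarrow> u \<noteq> 0 \<Longrightarrow> order_unit Gg Pc u"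
proof -
  assume u: "u \<in> Pc" "u \<noteq> 0"
  then obtain a i where a: "a \<in> G i i" "u = of_int a / of_int (den i)" unfolding Pc_den by blast
  have "\<exists>k::nat. of_nat k * u - z \<in> Pc \<and> z + of_nat k * u \<in> Pc" if z: "z \<in> Gg" for z
  proof -
    obtain b j where b: "z = of_int b / of_int (den j)" using z unfolding Gg_eq by blast
    define m where "m = max i j"
    obtain a' where a': "a' \<in> G m m" "u = of_int a' / of_int (den m)" using lift_Pc[OF a(1), of m] a(2) m_def by auto
    obtain c where c: "z = of_int (b * c) / of_int (den m)" using lift_Gg[of j m b] b m_def by auto
    define b' where "b' = b * c"
    have "a' \<noteq> 0" using a' u by auto
    then have a'1: "a' \<ge> 1" using G_nonneg[OF a'(1)] by simp
    obtain N where N: "\<forall>x\<ge>N. x \<in> G m m" using good_G[of m m] unfolding good_sg_def by blast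
    define k where "k = nat (\<bar>N\<bar> + \<bar>b'\<bar>)"
    have "of_nat k * a' \<ge> of_nat k" using a'1 by (simp add: mult_le_cancel_left1)
    moreover have "int k = \<bar>N\<bar> + \<bar>b'\<bar>" unfolding k_def by simp
    ultimately have "int k * a' - b' \<ge> N" "b' + int k * a' \<ge> N" by linarith+
    then have h1: "int k * a' - b' \<in> G m m" "b' + int k * a' \<in> G m m" using N by blast+
    have "of_nat k * u - z = of_int (int k * a' - b') / of_int (den m)"
      using a'(2) c unfolding b'_def by (simp add: diff_divide_distrib)
    moreover have "z + of_nat k * u = of_int (b' + int k * a') / of_int (den m)"
      using a'(2) c unfolding b'_def by (simp add: add_divide_distrib)
    ultimately show ?thesis using h1 unfolding Pc_den by blast
  qed
  then show ?thesis unfolding order_unit_def using u by blast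
qed

lemma simple_Gg: "simple_po_group Gg Pc"
  unfolding simple_po_group_def using po_Gg ou_Gg by blast

lemma rank_one_Gg: "rank_one Gg"
proof -
  have "(1::rat) = of_int 1 / of_int (den 0)" by (simp add: den_def Nn_0)
  then have "1 \<in> Gg" unfolding Gg_eq by blast
  then have "(\<lambda>x. x) ` Gg \<noteq> {0}" by force
  then show ?thesis unfolding rank_one_def group_hom_on_def by (intro exI[of _ "\<lambda>x. x"]) simp
qed

lemma emb_H: "order_embedding (dlim_group n) (dlim_cone P0 n) Gg Pc (\<lambda>x. x)"
  unfolding order_embedding_def
proof (intro conjI)
  show "group_hom_on (dlim_group n) (\<lambda>x. x)" unfolding group_hom_on_def by simp
  show "inj_on (\<lambda>x. x) (dlim_group n)" by simp
  have sub: "dlim_group n \<subseteq> Gg"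
  proof
    fix z assume "z \<in> dlim_group n"
    then obtain x j where "z = of_int x / of_int (Nn j)" unfolding dlim_group_def Nn_def by blast
    then have "z = of_int (r ^ j * x) / of_int (den j)" unfolding den_def using r_pos by simp
    then show "z \<in> Gg" unfolding Gg_eq by blast
  qed
  then show "(\<lambda>x. x) ` dlim_group n \<subseteq> Gg" by simp
  show "(\<lambda>x. x) ` dlim_cone P0 n = (\<lambda>x. x) ` dlim_group n \<inter> Pc"
  proof (simp, intro equalityI subsetI)
    fix z assume "z \<in> dlim_cone P0 n"
    then obtain x j where h: "x \<in> P0 j" "z = of_int x / of_int (Nn j)" unfolding dlim_cone_def Nn_def by blast
    have "z \<in> Pc" using CM[of x 0 j] h G_0j by simp
    moreover have "z \<in> dlim_group n" using h unfolding dlim_group_def Nn_def by blast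
    ultimately show "z \<in> dlim_group n \<inter> Pc" by blast
  next
    fix z assume "z \<in> dlim_group n \<inter> Pc"
    then obtain x j where h: "z = of_int x / of_int (Nn j)" "z \<in> Pc" unfolding dlim_group_def Nn_def by blast
    then have "x \<in> G 0 j" using CM_rev[of x 0 j] by simp
    then show "z \<in> dlim_cone P0 n" using h G_0j unfolding dlim_cone_def Nn_def by auto
  qed
qed

lemma emb_K: "order_embedding (dlim_group (\<lambda>_. r)) (dlim_cone (\<lambda>i. G i 0) (\<lambda>_. r)) Gg Pc (\<lambda>x. x)"
  unfolding order_embedding_def
proof (intro conjI)
  show "group_hom_on (dlim_group (\<lambda>_. r)) (\<lambda>x. x)" unfolding group_hom_on_def by simp
  show "inj_on (\<lambda>x. x) (dlim_group (\<lambda>_. r))" by simp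
  have sub: "dlim_group (\<lambda>_. r) \<subseteq> Gg"
  proof
    fix z assume "z \<in> dlim_group (\<lambda>_. r)"
    then obtain x j where "z = of_int x / of_int (r ^ j)" unfolding dlim_group_def by auto
    then have "z = of_int (Nn j * x) / of_int (den j)" unfolding den_def using Nn_pos
      by (simp add: less_imp_neq[symmetric])
    then show "z \<in> Gg" unfolding Gg_eq by blast
  qed
  then show "(\<lambda>x. x) ` dlim_group (\<lambda>_. r) \<subseteq> Gg" by simp
  show "(\<lambda>x. x) ` dlim_cone (\<lambda>i. G i 0) (\<lambda>_. r) = (\<lambda>x. x) ` dlim_group (\<lambda>_. r) \<inter> Pc"
  proof (simp, intro equalityI subsetI)
    fix z assume "z \<in> dlim_cone (\<lambda>i. G i 0) (\<lambda>_. r)"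
    then obtain x j where h: "x \<in> G j 0" "z = of_int x / of_int (r ^ j)" unfolding dlim_cone_def by auto
    have "z \<in> Pc" using CM[of x j 0] h Nn_0 by simp
    moreover have "z \<in> dlim_group (\<lambda>_. r)" using h unfolding dlim_group_def by auto
    ultimately show "z \<in> dlim_group (\<lambda>_. r) \<inter> Pc" by blast
  next
    fix z assume "z \<in> dlim_group (\<lambda>_. r) \<inter> Pc"
    then obtain x j where h: "z = of_int x / of_int (r ^ j)" "z \<in> Pc" unfolding dlim_group_def by auto
    then have "x \<in> G j 0" using CM_rev[of x j 0] Nn_0 by simp
    then show "z \<in> dlim_cone (\<lambda>i. G i 0) (\<lambda>_. r)" using h unfolding dlim_cone_def by auto
  qed
qed

end


context S begin

definition rgood :: "rat \<Rightarrow> bool" where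
  "rgood z \<longleftrightarrow> (\<exists>a d. 0 < d \<and> coprime d r \<and> z = of_int a / of_int d)"

definition sig :: rat where "sig = of_int s / of_int r"

primrec T :: "nat \<Rightarrow> rat set" where
  "T 0 = {z. 0 \<le> z \<and> rgood z}"
| "T (Suc I) = {y + sig ^ Suc I * of_int b | y b. y \<in> T I \<and> b \<in> B}"

lemma T_SucI: "y \<in> T I \<Longrightarrow> b \<in> B \<Longrightarrow> y + sig ^ Suc I * of_int b \<in> T (Suc I)"
  unfolding T.simps by blast

lemma T_SucE: "z \<in> T (Suc I) \<Longrightarrow> \<exists>y b. z = y + sig ^ Suc I * of_int b \<and> y \<in> T I \<and> b \<in> B"
  unfolding T.simps by blast

declare T.simps(2)[simp del]

lemma rne: "(of_int r :: rat) \<noteq> 0" using r_pos by simp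
lemma sig_r: "of_int r * sig = of_int s" unfolding sig_def using rne by simp
lemma sig_pos: "0 < sig" unfolding sig_def using r_pos s_pos by simp

lemma rg_int: "rgood (of_int a)"
  unfolding rgood_def by (rule exI[of _ a], rule exI[of _ 1]) simp

lemma rg_add: "rgood z1 \<Longrightarrow> rgood z2 \<Longrightarrow> rgood (z1 + z2)"
proof -
  assume "rgood z1" "rgood z2"
  then obtain a1 d1 a2 d2 where h: "0 < d1" "coprime d1 r" "z1 = of_int a1 / of_int d1"
    "0 < d2" "coprime d2 r" "z2 = of_int a2 / of_int d2" unfolding rgood_def by blast
  have "z1 + z2 = of_int (a1 * d2 + a2 * d1) / of_int (d1 * d2)" using h by (simp add: field_simps)
  moreover have "0 < d1 * d2" using h by simp
  moreover have "coprime (d1 * d2) r" using h by simp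
  ultimately show ?thesis unfolding rgood_def by blast
qed

lemma rg_mult: "rgood z \<Longrightarrow> rgood (of_int k * z)"
proof -
  assume "rgood z"
  then obtain a d where h: "0 < d" "coprime d r" "z = of_int a / of_int d" unfolding rgood_def by blast
  have "of_int k * z = of_int (k * a) / of_int d" using h by simp
  then show ?thesis using h unfolding rgood_def by blast
qed

lemma rg_neg: "rgood z \<Longrightarrow> rgood (- z)"
  using rg_mult[of z "-1"] by simp

lemma rg_diff: "rgood z1 \<Longrightarrow> rgood z2 \<Longrightarrow> rgood (z1 - z2)"
  using rg_add[of z1 "- z2"] rg_neg by simp

lemma rg_key: "rgood (of_int c / of_int r) \<Longrightarrow> r dvd c"
proof -
  assume "rgood (of_int c / of_int r)"
  then obtain a d where h: "0 < d" "coprime d r" "of_int c / of_int r = (of_int a / of_int d :: rat)"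
    unfolding rgood_def by blast
  have "of_int c * of_int d = (of_int a * of_int r :: rat)" using h(1,3) rne by (simp add: frac_eq_eq)
  then have "c * d = a * r" by (metis of_int_eq_iff of_int_mult)
  then have "r dvd c * d" by simp
  moreover have "coprime r d" using h(2) by (simp add: ac_simps)
  ultimately show "r dvd c" using coprime_dvd_mult_left_iff by blast
qed

lemma Nn_cop: "coprime (Nn j) r"
  unfolding Nn_def by (rule prod_coprime_left) (use cop_rn in \<open>simp add: ac_simps\<close>)

lemma T_nonneg: "z \<in> T I \<Longrightarrow> 0 \<le> z"
proof (induction I arbitrary: z)
  case 0 then show ?case by simp
next
  case (Suc I)
  then obtain y b where "z = y + sig ^ Suc I * of_int b" "y \<in> T I" "b \<in> B" using T_SucE by blast
  moreover have "0 \<le> sig ^ Suc I * of_int b" using B_nonneg[OF \<open>b \<in> B\<close>] sig_pos by simp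
  ultimately show ?case using Suc.IH by fastforce
qed

lemma rpow_sig: "of_int (r ^ I) * sig ^ Suc I = of_int (s ^ Suc I) / of_int r"
  unfolding sig_def using rne by (simp add: power_divide field_simps)

lemma T_rg: "z \<in> T I \<Longrightarrow> rgood (of_int (r ^ I) * z)"
proof (induction I arbitrary: z)
  case 0 then show ?case by simp
next
  case (Suc I)
  then obtain y b where h: "z = y + sig ^ Suc I * of_int b" "y \<in> T I" "b \<in> B" using T_SucE by blast
  have e: "of_int (r ^ Suc I) * z = of_int r * (of_int (r ^ I) * y) + of_int (s ^ Suc I * b)"
    using h(1) rpow_sig[of "Suc I"] rne unfolding sig_def by (simp add: field_simps power_divide)
  show ?case unfolding e by (rule rg_add[OF rg_mult[OF Suc.IH[OF h(2)]] rg_int])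
qed

lemma T0_cl: "z1 \<in> T 0 \<Longrightarrow> z2 \<in> T 0 \<Longrightarrow> z1 + z2 \<in> T 0"
  using rg_add by simp

lemma T_cl: "z1 \<in> T I \<Longrightarrow> z2 \<in> T I \<Longrightarrow> z1 + z2 \<in> T I"
proof (induction I arbitrary: z1 z2)
  case 0 then show ?case by (rule T0_cl)
next
  case (Suc I)
  obtain y1 b1 where h1: "z1 = y1 + sig ^ Suc I * of_int b1" "y1 \<in> T I" "b1 \<in> B" using Suc.prems(1) T_SucE by blast
  obtain y2 b2 where h2: "z2 = y2 + sig ^ Suc I * of_int b2" "y2 \<in> T I" "b2 \<in> B" using Suc.prems(2) T_SucE by blast
  have "z1 + z2 = (y1 + y2) + sig ^ Suc I * of_int (b1 + b2)" using h1 h2 by (simp add: algebra_simps)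
  moreover have "y1 + y2 \<in> T I" using Suc.IH h1 h2 by blast
  moreover have "b1 + b2 \<in> B" using B_cl h1 h2 by blast
  ultimately show ?case using T_SucI[of "y1 + y2" I "b1 + b2"] by simp
qed

lemma T_Suc_sub: "T I \<subseteq> T (Suc I)"
proof
  fix z assume "z \<in> T I"
  from T_SucI[OF this monoid_gen.zero] show "z \<in> T (Suc I)" by simp
qed

lemma T_mono: "I \<le> J \<Longrightarrow> T I \<subseteq> T J"
  using lift_Suc_mono_le[of T, OF T_Suc_sub] by blast

lemma T_absorb: "y \<in> T (Suc I) \<Longrightarrow> b \<in> B \<Longrightarrow> y + sig ^ Suc I * of_int b \<in> T (Suc I)"
proof -
  assume y: "y \<in> T (Suc I)" and b: "b \<in> B"
  have "sig ^ Suc I * of_int b \<in> T (Suc I)"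
  proof -
    have "(0::rat) \<in> T I"
    proof (induction I)
      case 0 show ?case using rg_int[of 0] by simp
    next
      case (Suc I) from T_SucI[OF Suc monoid_gen.zero] show ?case by simp
    qed
    from T_SucI[OF this b] show ?thesis by simp
  qed
  then show ?thesis using T_cl y by blast
qed

lemma T0_int: "0 \<le> m \<Longrightarrow> of_int m \<in> T 0"
  using rg_int by simp

lemma Q_T: "Q i j \<subseteq> T i"
proof (induction i arbitrary: j)
  case 0
  show ?case
  proof
    fix z assume "z \<in> Q 0 j"
    then obtain x where x: "x \<in> G 0 j" "z = of_int x / of_int (Nn j)" unfolding Q_def by auto
    have "0 \<le> (of_int x::rat)" using G_nonneg[OF x(1)] by simp
    moreover have "0 < (of_int (Nn j)::rat)" using Nn_pos by simp
    ultimately have "0 \<le> z" using x(2) by (simp add: divide_nonneg_pos)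
    moreover have "rgood z" unfolding rgood_def using x Nn_pos Nn_cop by blast
    ultimately show "z \<in> T 0" by simp
  qed
next
  case (Suc i)
  note IHi = Suc.IH
  show ?case
  proof (induction j)
    case 0
    show ?case
    proof
      fix z assume "z \<in> Q (Suc i) 0"
      then obtain x where x: "x \<in> G (Suc i) 0" "z = of_int x / of_int (r ^ Suc i * Nn 0)" unfolding Q_def by blast
      then obtain a b where ab: "x = r * a + s ^ Suc i * b" "a \<in> G i 0" "b \<in> B"
        using G_i0 unfolding lin2_def by blast
      have "z = of_int a / of_int (r ^ i * Nn 0) + sig ^ Suc i * of_int b"
        using x(2) ab(1) rne unfolding sig_def Nn_0 by (simp add: field_simps power_divide)
      moreover have "of_int a / of_int (r ^ i * Nn 0) \<in> T i" using IHi ab(2) unfolding Q_def by blast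
      ultimately show "z \<in> T (Suc i)" using T_SucI[OF _ ab(3)] by simp
    qed
  next
    case (Suc j)
    show ?case
    proof
      fix z assume "z \<in> Q (Suc i) (Suc j)"
      then obtain x where x: "x \<in> G (Suc i) (Suc j)" "z = of_int x / of_int (r ^ Suc i * Nn (Suc j))" unfolding Q_def by blast
      then obtain a b where ab: "x = r * a + n j * b" "a \<in> G i (Suc j)" "b \<in> G (Suc i) j"
        using G_ij unfolding lin2_def by blast
      have nj: "(of_int (n j) :: rat) \<noteq> 0" using n_pos by (metis less_irrefl of_int_eq_0_iff)
      have Nj: "(of_int (Nn j) :: rat) \<noteq> 0" using Nn_pos by (metis less_irrefl of_int_eq_0_iff)
      have "z = of_int a / of_int (r ^ i * Nn (Suc j)) + of_int b / of_int (r ^ Suc i * Nn j)"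
        using x(2) ab(1) rne nj Nj unfolding Nn_Suc by (simp add: field_simps)
      moreover have m1: "of_int a / of_int (r ^ i * Nn (Suc j)) \<in> T (Suc i)"
        using IHi ab(2) T_Suc_sub unfolding Q_def by blast
      moreover have m2: "of_int b / of_int (r ^ Suc i * Nn j) \<in> T (Suc i)"
        using Suc.IH ab(3) unfolding Q_def by blast
      ultimately show "z \<in> T (Suc i)" using T_cl[OF m1 m2] by (simp only:)
    qed
  qed
qed

lemma Pc_T: "z \<in> Pc \<Longrightarrow> \<exists>I. z \<in> T I"
  using Q_T unfolding Pc_eq by blast

lemma X_step:
  assumes z: "z \<in> T (Suc I)" and g: "rgood (of_int (r ^ I) * z)"
  shows "z \<in> T I"
proof -
  obtain y b where h: "z = y + sig ^ Suc I * of_int b" "y \<in> T I" "b \<in> B" using z T_SucE by blast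
  have "of_int (r ^ I) * z - of_int (r ^ I) * y = of_int (s ^ Suc I * b) / of_int r"
    using h(1) rpow_sig[of I] by (simp add: algebra_simps)
  then have "rgood (of_int (s ^ Suc I * b) / of_int r)" using rg_diff[OF g T_rg[OF h(2)]] by simp
  then have "r dvd s ^ Suc I * b" by (rule rg_key)
  then have "r dvd b" using cop_rsp coprime_dvd_mult_right_iff by blast
  then obtain b' where b': "b = r * b'" by blast
  have b'0: "0 \<le> b'" using B_nonneg[OF h(3)] b' r_pos by (simp add: zero_le_mult_iff)
  have e: "sig ^ Suc I * of_int b = sig ^ I * of_int (s * b')"
    using b' sig_r by (simp add: algebra_simps)
  show ?thesis
  proof (cases I)
    case 0
    have "of_int (s * b') \<in> T 0" by (rule T0_int) (use b'0 s_pos in simp)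
    then show ?thesis using h(1) e 0 T0_cl h(2) by simp
  next
    case (Suc I')
    have "s * b' \<in> B" using B_mult[OF b'0 s_in_B] by (simp add: ac_simps)
    then have m: "y + sig ^ Suc I' * of_int (s * b') \<in> T (Suc I')"
      by (intro T_absorb) (use h(2) Suc in auto)
    have "z = y + sig ^ I * of_int (s * b')" using h(1) e by simp
    then show ?thesis using m Suc by (simp only:)
  qed
qed

lemma X_iter: "z \<in> T (m + d) \<Longrightarrow> rgood (of_int (r ^ m) * z) \<Longrightarrow> z \<in> T m"
proof (induction d)
  case 0 then show ?case by simp
next
  case (Suc d)
  have "rgood (of_int (r ^ (m + d)) * z)"
    using rg_mult[OF Suc.prems(2), of "r ^ d"] by (simp add: power_add ac_simps)
  then have "z \<in> T (m + d)" using X_step Suc.prems(1) by simp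
  then show ?case using Suc.IH Suc.prems(2) by blast
qed

definition w :: "nat \<Rightarrow> rat" where "w k = sig ^ Suc k * of_int r"

lemma w0: "w 0 = of_int s" unfolding w_def using sig_r by (simp add: ac_simps)

lemma B_char: "b \<in> B \<Longrightarrow> \<exists>\<alpha> \<beta>. 0 \<le> \<alpha> \<and> 0 \<le> \<beta> \<and> b = \<alpha> * r + \<beta> * (s - r)"
proof -
  assume "b \<in> B"
  then obtain i j where "b = int i * r + int j * (s - r)" unfolding monoid_gen_pair by blast
  then show ?thesis by (intro exI[of _ "int i"] exI[of _ "int j"]) simp
qed

lemma main_b:
  assumes t: "int t < r"
  shows "of_nat t * w k - of_int (r * s) \<notin> T I"
proof (induction k arbitrary: I)
  case 0
  have e0: "of_nat t * w 0 - of_int (r * s) = (of_int ((int t - r) * s) :: rat)" using w0 by (simp add: algebra_simps)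
  have "(int t - r) * s < 0" using t s_pos by (simp add: mult_neg_pos)
  then have "of_nat t * w 0 - of_int (r * s) < (0::rat)" unfolding e0 by (simp only: of_int_less_0_iff)
  then show ?case using T_nonneg by force
next
  case (Suc k)
  define z where "z = of_nat t * w (Suc k) - of_int (r * s)"
  have rz: "of_int (r ^ Suc k) * z = of_int (int t * s ^ Suc (Suc k) - r ^ Suc (Suc k) * s)"
    unfolding z_def w_def sig_def using rne by (simp add: field_simps power_divide)
  have zT: "z \<in> T (Suc k)" if "z \<in> T I"
  proof (cases "I \<le> Suc k")
    case True then show ?thesis using T_mono that by blast
  next
    case False
    then obtain d where "I = Suc k + d" using le_Suc_ex[of "Suc k" I] by auto
    moreover have "rgood (of_int (r ^ Suc k) * z)" unfolding rz by (rule rg_int)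
    ultimately show ?thesis using X_iter[of z "Suc k" d] that by simp
  qed
  show ?case
  proof
    assume "of_nat t * w (Suc k) - of_int (r * s) \<in> T I"
    then have "z \<in> T (Suc k)" using zT z_def by simp
    then obtain y b where h: "z = y + sig ^ Suc k * of_int b" "y \<in> T k" "b \<in> B" using T_SucE by blast
    have e1: "of_int (r ^ k) * z = of_int (r ^ k) * y + of_int (s ^ Suc k * b) / of_int r"
      using h(1) rpow_sig[of k] by (simp add: algebra_simps)
    have e2: "of_int (r ^ k) * z = of_int (int t * s ^ Suc (Suc k)) / of_int r - of_int (r ^ Suc k * s)"
      unfolding z_def w_def sig_def using rne by (simp add: field_simps power_divide)
    have "of_int (s ^ Suc k * (b - int t * s)) / of_int r
          = (of_int (s ^ Suc k * b) / of_int r - of_int (int t * s ^ Suc (Suc k)) / of_int r :: rat)"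
      using rne by (simp add: field_simps)
    also have "... = - of_int (r ^ Suc k * s) - of_int (r ^ k) * y" using e1 e2 by simp
    finally have eq: "of_int (s ^ Suc k * (b - int t * s)) / of_int r = - of_int (r ^ Suc k * s) - of_int (r ^ k) * y" .
    have "rgood (- of_int (r ^ Suc k * s) - of_int (r ^ k) * y)"
      by (rule rg_diff[OF rg_neg[OF rg_int] T_rg[OF h(2)]])
    then have "rgood (of_int (s ^ Suc k * (b - int t * s)) / of_int r)" unfolding eq .
    then have "r dvd s ^ Suc k * (b - int t * s)" by (rule rg_key)
    then have d1: "r dvd b - int t * s" using cop_rsp coprime_dvd_mult_right_iff by blast
    obtain \<alpha> \<beta> where ab: "0 \<le> \<alpha>" "0 \<le> \<beta>" "b = \<alpha> * r + \<beta> * (s - r)" using B_char[OF h(3)] by blast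
    have "b - int t * s = r * (\<alpha> - \<beta>) + (\<beta> - int t) * s" using ab(3) by (simp add: algebra_simps)
    then have "r dvd (\<beta> - int t) * s" using d1 by (metis add_diff_cancel_left' dvd_diff dvd_triv_left)
    then have d2: "r dvd \<beta> - int t" using cop_rs coprime_dvd_mult_left_iff by blast
    have bt: "\<beta> \<ge> int t"
    proof (rule ccontr)
      assume "\<not> \<beta> \<ge> int t"
      then have "0 < int t - \<beta>" "int t - \<beta> < r" using ab(2) t by simp_all
      then have "\<not> r dvd int t - \<beta>" using zdvd_not_zless by blast
      moreover have "r dvd int t - \<beta>" using d2 by (metis dvd_minus_iff minus_diff_eq)
      ultimately show False by blast
    qed
    have b2: "b - int t * (s - r) \<in> B"
    proof -
      have "b - int t * (s - r) = int (nat \<alpha>) * r + int (nat (\<beta> - int t)) * (s - r)"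
        using ab bt by (simp add: algebra_simps)
      then show ?thesis unfolding monoid_gen_pair by blast
    qed
    have "z - of_nat t * sig ^ Suc k * of_int (s - r) = y + sig ^ Suc k * of_int (b - int t * (s - r))"
      using h(1) by (simp add: algebra_simps)
    then have "z - of_nat t * sig ^ Suc k * of_int (s - r) \<in> T (Suc k)" using T_SucI[OF h(2) b2] by simp
    moreover have "z - of_nat t * sig ^ Suc k * of_int (s - r) = of_nat t * w k - of_int (r * s)"
    proof -
      have "w (Suc k) = sig ^ Suc k * (of_int r * sig)" unfolding w_def by (simp add: ac_simps)
      then have "w (Suc k) = sig ^ Suc k * of_int s" using sig_r by simp
      then show ?thesis unfolding z_def w_def by (simp add: algebra_simps)
    qed
    ultimately show False using Suc.IH by simp
  qed
qed

end


context S begin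

lemma Pc_mult: "z \<in> Pc \<Longrightarrow> of_nat m * z \<in> Pc"
proof (induction m)
  case 0 then show ?case using Pc_zero by simp
next
  case (Suc m)
  have "of_nat (Suc m) * z = of_nat m * z + z" by (simp add: algebra_simps)
  then show ?case using Pc_add[OF Suc.IH[OF Suc.prems] Suc.prems] by simp
qed

lemma A_Pc: "x \<in> monoid_gen {q, p - q} \<Longrightarrow> of_int x \<in> Pc"
proof -
  assume "x \<in> monoid_gen {q, p - q}"
  then have "x \<in> G 0 0" using G_0j P0_0 by simp
  from CM[OF this] show ?thesis by (simp add: Nn_0)
qed

lemma sB_Pc: "b \<in> B \<Longrightarrow> sig ^ Suc i * of_int b \<in> Pc"
proof -
  assume "b \<in> B"
  from CM[OF sB_lemma[OF this, of i]]
  have "of_int (s ^ Suc i * b) / of_int (r ^ Suc i * Nn 0) \<in> Pc" .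
  moreover have "of_int (s ^ Suc i * b) / of_int (r ^ Suc i * Nn 0) = sig ^ Suc i * (of_int b :: rat)"
    unfolding sig_def Nn_0 using rne by (simp add: power_divide field_simps)
  ultimately show ?thesis by simp
qed

lemma sr_B: "s - r \<in> B" by (auto intro: monoid_gen.gen)

lemma w_diff: "w (Suc k) - w k = sig ^ Suc k * of_int (s - r)"
proof -
  have s: "(of_int s :: rat) = of_int r * sig" using sig_r by simp
  show ?thesis unfolding w_def of_int_diff s power_Suc by algebra
qed

lemma w_step: "w (Suc k) - w k \<in> Pc"
  unfolding w_diff by (rule sB_Pc[OF sr_B])

lemma s_A: "s \<in> monoid_gen {q, p - q}" by (rule s_in)

lemma w_Pc: "w k \<in> Pc"
proof (induction k)
  case 0 then show ?case unfolding w0 by (rule A_Pc[OF s_in])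
next
  case (Suc k)
  have "w (Suc k) = w k + (w (Suc k) - w k)" by simp
  then show ?case using Pc_add[OF Suc w_step[of k]] by simp
qed

lemma po_trans: "po_le Pc x y \<Longrightarrow> po_le Pc y z \<Longrightarrow> po_le Pc x z"
proof -
  assume "po_le Pc x y" "po_le Pc y z"
  then have "(z - y) + (y - x) \<in> Pc" unfolding po_le_def using Pc_add by blast
  then show ?thesis unfolding po_le_def by simp
qed

lemma po_refl: "po_le Pc x x" unfolding po_le_def using Pc_zero by simp

lemma po_add: "po_le Pc x x' \<Longrightarrow> po_le Pc y y' \<Longrightarrow> po_le Pc (x + y) (x' + y')"
proof -
  assume "po_le Pc x x'" "po_le Pc y y'"
  then have "(x' - x) + (y' - y) \<in> Pc" unfolding po_le_def using Pc_add by blast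
  moreover have "(x' - x) + (y' - y) = (x' + y') - (x + y)" by simp
  ultimately show ?thesis unfolding po_le_def by simp
qed

lemma w_mono: "k \<le> k' \<Longrightarrow> po_le Pc (w k) (w k')"
proof (induction k' rule: dec_induct)
  case base then show ?case by (rule po_refl)
next
  case (step m)
  have "po_le Pc (w m) (w (Suc m))" unfolding po_le_def by (rule w_step)
  then show ?case using po_trans step.IH by blast
qed

lemma w_mono_mult: "k \<le> k' \<Longrightarrow> po_le Pc (of_nat c * w k) (of_nat c * w k')"
proof -
  assume "k \<le> k'"
  then have "w k' - w k \<in> Pc" using w_mono unfolding po_le_def by blast
  then have "of_nat c * (w k' - w k) \<in> Pc" by (rule Pc_mult)
  then show ?thesis unfolding po_le_def by (simp add: algebra_simps)
qed

definition u0 :: rat where "u0 = of_int (s * (s - r))"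

lemma u0_Pc: "u0 \<in> Pc"
  unfolding u0_def
proof (rule A_Pc)
  have "(s - r) * s \<in> monoid_gen {q, p - q}" by (rule A_mult[OF _ s_in]) (use s_pos in simp)
  then show "s * (s - r) \<in> monoid_gen {q, p - q}" by (simp add: ac_simps)
qed

lemma u0_ne: "u0 \<noteq> 0" unfolding u0_def using s_pos by simp

lemma X_u0: "of_int r * (w (Suc k) - w k) - u0 \<in> Pc"
proof (induction k)
  case 0
  have s: "(of_int s :: rat) = of_int r * sig" using sig_r by simp
  have "of_int r * (w (Suc 0) - w 0) - u0 = 0"
    unfolding w_def u0_def of_int_mult of_int_diff s power_Suc by algebra
  then show ?case using Pc_zero by simp
next
  case (Suc k)
  have s: "(of_int s :: rat) = of_int r * sig" using sig_r by simp
  have e: "of_int r * (w (Suc (Suc k)) - w (Suc k)) - u0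
     = (of_int r * (w (Suc k) - w k) - u0) + sig ^ Suc k * of_int ((s - r) * (s - r))"
    unfolding w_def u0_def of_int_mult of_int_diff s power_Suc by algebra
  have "(s - r) * (s - r) \<in> B" by (rule B_mult[OF _ sr_B]) (use s_pos in simp)
  then have "sig ^ Suc k * of_int ((s - r) * (s - r)) \<in> Pc" by (rule sB_Pc)
  then show ?case unfolding e using Pc_add[OF Suc] by blast
qed

lemma rw_u0: "of_int r * w k - of_nat k * u0 \<in> Pc"
proof (induction k)
  case 0
  have "r * s \<in> monoid_gen {q, p - q}" by (rule A_mult[OF _ s_in]) (use r_pos in simp)
  then have "of_int (r * s) \<in> Pc" by (rule A_Pc)
  then show ?case unfolding w0 by simp
next
  case (Suc k)
  have "of_int r * w (Suc k) - of_nat (Suc k) * u0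
      = (of_int r * w k - of_nat k * u0) + (of_int r * (w (Suc k) - w k) - u0)"
    by (simp add: algebra_simps)
  then show ?case using Pc_add[OF Suc X_u0] by simp
qed

definition Dset :: "rat set" where "Dset = {z \<in> Pc. \<exists>k. po_le Pc z (w k)}"

lemma ivm: "iv_mult Pc Dset (Suc t) = {z \<in> Pc. \<exists>k. po_le Pc z (of_nat (Suc t) * w k)}"
proof (induction t)
  case 0
  show ?case
  proof (intro equalityI subsetI)
    fix z assume "z \<in> iv_mult Pc Dset (Suc 0)"
    then have "z \<in> iv_sum Pc {0} Dset" by simp
    then obtain y where "z \<in> Pc" "y \<in> Dset" "po_le Pc z y" unfolding iv_sum_def by auto
    then obtain k where "po_le Pc z (w k)" unfolding Dset_def using po_trans by blast
    then show "z \<in> {z \<in> Pc. \<exists>k. po_le Pc z (of_nat (Suc 0) * w k)}" using \<open>z \<in> Pc\<close> by auto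
  next
    fix z assume "z \<in> {z \<in> Pc. \<exists>k. po_le Pc z (of_nat (Suc 0) * w k)}"
    then obtain k where k: "z \<in> Pc" "po_le Pc z (w k)" by auto
    have "w k \<in> Dset" unfolding Dset_def using w_Pc po_refl by blast
    then have "z \<in> iv_sum Pc {0} Dset" unfolding iv_sum_def using k by force
    then show "z \<in> iv_mult Pc Dset (Suc 0)" by simp
  qed
next
  case (Suc t)
  show ?case
  proof (intro equalityI subsetI)
    fix z assume "z \<in> iv_mult Pc Dset (Suc (Suc t))"
    then obtain x y where h: "z \<in> Pc" "x \<in> iv_mult Pc Dset (Suc t)" "y \<in> Dset" "po_le Pc z (x + y)"
      unfolding iv_mult.simps(2)[of _ _ "Suc t"] iv_sum_def by blast
    obtain a where a: "po_le Pc x (of_nat (Suc t) * w a)" using h(2) Suc.IH by auto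
    obtain b where b: "po_le Pc y (w b)" using h(3) unfolding Dset_def by auto
    define m where "m = max a b"
    have "po_le Pc x (of_nat (Suc t) * w m)"
      using po_trans[OF a w_mono_mult[of a m]] m_def by simp
    moreover have "po_le Pc y (w m)" using po_trans[OF b w_mono[of b m]] m_def by simp
    ultimately have "po_le Pc (x + y) (of_nat (Suc t) * w m + w m)" by (rule po_add)
    then have "po_le Pc z (of_nat (Suc (Suc t)) * w m)" using po_trans[OF h(4)] by (simp add: algebra_simps)
    then show "z \<in> {z \<in> Pc. \<exists>k. po_le Pc z (of_nat (Suc (Suc t)) * w k)}" using h(1) by blast
  next
    fix z assume "z \<in> {z \<in> Pc. \<exists>k. po_le Pc z (of_nat (Suc (Suc t)) * w k)}"
    then obtain k where k: "z \<in> Pc" "po_le Pc z (of_nat (Suc (Suc t)) * w k)" by auto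
    have x: "of_nat (Suc t) * w k \<in> iv_mult Pc Dset (Suc t)"
      unfolding Suc.IH using Pc_mult[OF w_Pc] po_refl by blast
    have y: "w k \<in> Dset" unfolding Dset_def using w_Pc po_refl by blast
    have "of_nat (Suc (Suc t)) * w k = of_nat (Suc t) * w k + w k" by (simp add: algebra_simps)
    then have "po_le Pc z (of_nat (Suc t) * w k + w k)" using k(2) by simp
    then show "z \<in> iv_mult Pc Dset (Suc (Suc t))"
      unfolding iv_mult.simps(2)[of _ _ "Suc t"] iv_sum_def using k(1) x y by blast
  qed
qed

lemma interval_D: "is_interval Pc Dset"
  unfolding is_interval_def
proof (intro conjI ballI impI)
  show "Dset \<subseteq> Pc" unfolding Dset_def by blast
  have "0 \<in> Dset" unfolding Dset_def po_le_def using Pc_zero w_Pc by auto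
  then show "Dset \<noteq> {}" by blast
  show "\<exists>z\<in>Dset. po_le Pc x z \<and> po_le Pc y z" if hxy: "x \<in> Dset" "y \<in> Dset" for x y
  proof -
    obtain a where a: "po_le Pc x (w a)" using hxy unfolding Dset_def by blast
    obtain b where b: "po_le Pc y (w b)" using hxy unfolding Dset_def by blast
    define m where "m = max a b"
    have "w m \<in> Dset" unfolding Dset_def using w_Pc po_refl by blast
    moreover have "po_le Pc x (w m)" using po_trans[OF a w_mono[of a m]] m_def by simp
    moreover have "po_le Pc y (w m)" using po_trans[OF b w_mono[of b m]] m_def by simp
    ultimately show ?thesis by blast
  qed
  show "y \<in> Dset" if "x \<in> Dset" "y \<in> Pc" "po_le Pc y x" for x y
    using that po_trans unfolding Dset_def by blast
qed

lemma part4: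
  "\<exists>D. is_interval Pc D
       \<and> (\<forall>t::nat. 1 \<le> t \<and> int t \<le> r - 1 \<longrightarrow> iv_mult Pc D t \<noteq> Pc)
       \<and> iv_mult Pc D (nat r) = Pc"
proof (intro exI[of _ Dset] conjI allI impI)
  show "is_interval Pc Dset" by (rule interval_D)
next
  fix t :: nat assume t: "1 \<le> t \<and> int t \<le> r - 1"
  then obtain t' where t': "t = Suc t'" by (metis Suc_le_D One_nat_def)
  have rs_A: "r * s \<in> monoid_gen {q, p - q}" by (rule A_mult[OF _ s_in]) (use r_pos in simp)
  have rsP: "of_int (r * s) \<in> Pc" by (rule A_Pc[OF rs_A])
  show "iv_mult Pc Dset t \<noteq> Pc"
  proof
    assume "iv_mult Pc Dset t = Pc"
    then have "of_int (r * s) \<in> iv_mult Pc Dset t" using rsP by simp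
    then obtain k where "po_le Pc (of_int (r * s)) (of_nat t * w k)" unfolding t' ivm by auto
    then have "of_nat t * w k - of_int (r * s) \<in> Pc" unfolding po_le_def .
    then obtain I where "of_nat t * w k - of_int (r * s) \<in> T I" using Pc_T by blast
    moreover have "int t < r" using t by simp
    ultimately show False using main_b by blast
  qed
next
  have nr: "nat r = Suc (nat r - 1)" using r_pos by simp
  have "iv_mult Pc Dset (nat r) = {z \<in> Pc. \<exists>k. po_le Pc z (of_nat (nat r) * w k)}"
    using ivm[of "nat r - 1"] nr by simp
  also have "... = Pc"
  proof (intro equalityI subsetI)
    fix z assume "z \<in> {z \<in> Pc. \<exists>k. po_le Pc z (of_nat (nat r) * w k)}"
    then show "z \<in> Pc" by blast
  next
    fix z assume z: "z \<in> Pc"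
    have "order_unit Gg Pc u0" by (rule ou_Gg[OF u0_Pc u0_ne])
    moreover have "z \<in> Gg" using z Pc_Gg by blast
    ultimately obtain k :: nat where k: "of_nat k * u0 - z \<in> Pc" unfolding order_unit_def by blast
    have "of_int r * w k - z = (of_int r * w k - of_nat k * u0) + (of_nat k * u0 - z)" by simp
    then have "of_int r * w k - z \<in> Pc" using Pc_add[OF rw_u0[of k] k] by simp
    moreover have "(of_nat (nat r) :: rat) = of_int r" using r_pos by simp
    ultimately have "po_le Pc z (of_nat (nat r) * w k)" unfolding po_le_def by simp
    then show "z \<in> {z \<in> Pc. \<exists>k. po_le Pc z (of_nat (nat r) * w k)}" using z by blast
  qed
  finally show "iv_mult Pc Dset (nat r) = Pc" .
qed

lemma main:
  "(\<forall>i j. simple_component (G i j))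
   \<and> (\<forall>i j. order_embedding (UNIV :: int set) (G i j) (UNIV :: int set) (G i (Suc j)) (\<lambda>x. n j * x)
           \<and> order_embedding (UNIV :: int set) (G i j) (UNIV :: int set) (G (Suc i) j) (\<lambda>x. r * x))
   \<and> (simple_po_group Gg Pc \<and> rank_one Gg
      \<and> (\<exists>\<phi>. order_embedding (dlim_group n) (dlim_cone P0 n) Gg Pc \<phi>)
      \<and> (\<exists>\<psi>. order_embedding (dlim_group (\<lambda>_. r)) (dlim_cone (\<lambda>i. G i 0) (\<lambda>_. r)) Gg Pc \<psi>))
   \<and> (\<exists>D. is_interval Pc D
          \<and> (\<forall>t::nat. 1 \<le> t \<and> int t \<le> r - 1 \<longrightarrow> iv_mult Pc D t \<noteq> Pc)
          \<and> iv_mult Pc D (nat r) = Pc)"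
  using part12 simple_Gg rank_one_Gg emb_H emb_K part4 by blast

end

theorem proposition3p3:
  fixes p q r s :: int
    and n :: "nat \<Rightarrow> int"
    and P0 :: "nat \<Rightarrow> int set"
    and G :: "nat \<Rightarrow> nat \<Rightarrow> int set"
  assumes pq: "0 < p" "0 < q" "1 < q" "q < p - q" "gcd p q = 1"
    and n_pos: "\<forall>j. 0 < n j"
    and P0_simple: "\<forall>j. simple_component (P0 j)"
    and P0_0: "P0 0 = monoid_gen {q, p - q}"
    and P0_emb: "\<forall>j. order_embedding (UNIV :: int set) (P0 j) (UNIV :: int set) (P0 (Suc j)) (\<lambda>x. n j * x)"
    and r_pos: "0 < r" and r_gt: "q < r"
    and r_cop: "coprime_gen r n"
    and s_in: "s \<in> monoid_gen {q, p - q}"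
    and rs: "gcd r s = 1" "r < s - r"
    and G_0j: "\<forall>j. G 0 j = P0 j"
    and G_i0: "\<forall>i. G (Suc i) 0 = lin2 r (G i 0) (s ^ Suc i) (monoid_gen {r, s - r})"
    and G_ij: "\<forall>i j. G (Suc i) (Suc j) = lin2 r (G i (Suc j)) (n j) (G (Suc i) j)"
  shows
    "(\<forall>i j. simple_component (G i j))
     \<and> (\<forall>i j. order_embedding (UNIV :: int set) (G i j) (UNIV :: int set) (G i (Suc j)) (\<lambda>x. n j * x)
             \<and> order_embedding (UNIV :: int set) (G i j) (UNIV :: int set) (G (Suc i) j) (\<lambda>x. r * x))
     \<and> (simple_po_group (dlim_group (\<lambda>i. r * n i)) (dlim_cone (\<lambda>i. G i i) (\<lambda>i. r * n i))
        \<and> rank_one (dlim_group (\<lambda>i. r * n i))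
        \<and> (\<exists>\<phi>. order_embedding (dlim_group n) (dlim_cone P0 n)
                 (dlim_group (\<lambda>i. r * n i)) (dlim_cone (\<lambda>i. G i i) (\<lambda>i. r * n i)) \<phi>)
        \<and> (\<exists>\<psi>. order_embedding (dlim_group (\<lambda>_. r)) (dlim_cone (\<lambda>i. G i 0) (\<lambda>_. r))
                 (dlim_group (\<lambda>i. r * n i)) (dlim_cone (\<lambda>i. G i i) (\<lambda>i. r * n i)) \<psi>))
     \<and> (\<exists>D. is_interval (dlim_cone (\<lambda>i. G i i) (\<lambda>i. r * n i)) D
            \<and> (\<forall>t::nat. 1 \<le> t \<and> int t \<le> r - 1 \<longrightarrow>
                 iv_mult (dlim_cone (\<lambda>i. G i i) (\<lambda>i. r * n i)) D t \<noteq> dlim_cone (\<lambda>i. G i i) (\<lambda>i. r * n i))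
            \<and> iv_mult (dlim_cone (\<lambda>i. G i i) (\<lambda>i. r * n i)) D (nat r) = dlim_cone (\<lambda>i. G i i) (\<lambda>i. r * n i))"
proof -
  have "S p q r s n P0 G"
    unfolding S_def using pq n_pos P0_simple P0_0 P0_emb r_pos r_gt r_cop s_in rs G_0j G_i0 G_ij by blast
  then interpret L: S p q r s n P0 G .
  show ?thesis using L.main .
qed

end
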